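(* The target discounted-sum problem TDS is decidable for every discount factor $\lambda\ge\frac12$, i.e., restricted to instances with $\frac12\le\lambda<1$.
   Context: An instance of TDS consists of a rational discount factor $0<\lambda<1$, a rational target $t$, and rational weights $a,b$; it asks whether there exists an infinite sequence $w\in\{a,b\}^\omega$ with $\sum_{i=0}^\infty w(i)\lambda^i=t$. *)

theory Defs
  imports Complex_Main "HOL-Library.Nat_Bijection"
begin

definition TDS :: "rat \<Rightarrow> rat \<Rightarrow> rat \<Rightarrow> rat \<Rightarrow> bool" where
  "TDS lam t a b \<longleftrightarrow>
     (\<exists>w :: nat \<Rightarrow> rat. (\<forall>i. w i \<in> {a, b}) \<and>
        (\<lambda>i. real_of_rat (w i) * real_of_rat lam ^ i) sums real_of_rat t)"

datatype recf =
    Zero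
  | Succ
  | Proj nat
  | Comp recf "recf list"
  | Prim recf recf
  | Mn recf

inductive reval :: "recf \<Rightarrow> nat list \<Rightarrow> nat \<Rightarrow> bool" where
  zero: "reval Zero xs 0"
| succ: "reval Succ (x # xs) (Suc x)"
| proj: "i < length xs \<Longrightarrow> reval (Proj i) xs (xs ! i)"
| comp: "list_all2 (\<lambda>g y. reval g xs y) gs ys \<Longrightarrow> reval f ys z \<Longrightarrow> reval (Comp f gs) xs z"
| prim0: "reval f xs y \<Longrightarrow> reval (Prim f g) (0 # xs) y"
| primS: "reval (Prim f g) (n # xs) r \<Longrightarrow> reval g (r # n # xs) y \<Longrightarrow>
           reval (Prim f g) (Suc n # xs) y"
| mn: "reval f (n # xs) 0 \<Longrightarrow> (\<forall>m<n. \<exists>y. y > 0 \<and> reval f (m # xs) y) \<Longrightarrow>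
        reval (Mn f) xs n"

definition rat_code :: "rat \<Rightarrow> nat" where
  "rat_code q = prod_encode (int_encode (fst (quotient_of q)), int_encode (snd (quotient_of q)))"

definition instance_code :: "rat \<Rightarrow> rat \<Rightarrow> rat \<Rightarrow> rat \<Rightarrow> nat" where
  "instance_code lam t a b =
     prod_encode (rat_code lam, prod_encode (rat_code t, prod_encode (rat_code a, rat_code b)))"

definition total_decider :: "recf \<Rightarrow> bool" where
  "total_decider f \<longleftrightarrow> (\<forall>n. reval f [n] 0 \<or> reval f [n] 1)"

end

theory Submission
  imports Defs
begin


lemma list_all2_det:
  "list_all2 (\<lambda>g y. reval g xs y \<and> (\<forall>y'. reval g xs y' \<longrightarrow> y = y')) gs ys \<Longrightarrow>
   list_all2 (\<lambda>g y. reval g xs y) gs ys' \<Longrightarrow> ys = ys'"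
proof (induction gs arbitrary: ys ys')
  case Nil then show ?case by simp
next
  case (Cons g gs)
  then show ?case by (auto simp: list_all2_Cons1)
qed

inductive_cases MnE: "reval (Mn f) xs n"
inductive_cases ZeroE: "reval Zero xs n"
inductive_cases SuccE: "reval Succ xs n"
inductive_cases ProjE: "reval (Proj i) xs n"
inductive_cases CompE: "reval (Comp f gs) xs n"
inductive_cases Prim0E: "reval (Prim f g) (0 # xs) n"
inductive_cases PrimSE: "reval (Prim f g) (Suc m # xs) n"

lemma reval_det: "reval f xs y \<Longrightarrow> reval f xs y' \<Longrightarrow> y = y'"
proof (induction arbitrary: y' rule: reval.induct)
  case (zero xs) then show ?case by (blast elim: ZeroE)
next
  case (succ x xs) then show ?case by (blast elim: SuccE)
next
  case (proj i xs) then show ?case by (blast elim: ProjE)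
next
  case (comp xs gs ys f z)
  note L = comp.IH(1) and IHf = comp.IH(2)
  from comp.prems show ?case
  proof (rule CompE)
    fix ys' assume comp: "list_all2 (\<lambda>g. reval g xs) gs ys'" "reval f ys' y'"
    have "ys = ys'" by (rule list_all2_det[OF L comp(1)])
    then show ?thesis using comp IHf by auto
  qed
next
  case (prim0 f xs y g) then show ?case by (blast elim: Prim0E)
next
  case (primS f g n xs r y) from primS.prems show ?case
    by (elim PrimSE) (use primS.IH in blast)
next
  case (mn f n xs)
  from mn.prems have A: "reval f (y' # xs) 0" and B: "\<forall>m<y'. \<exists>y>0. reval f (m # xs) y"
    by (auto elim: MnE)
  have IH1: "\<And>z. reval f (n # xs) z \<Longrightarrow> 0 = z" using mn.IH(1) by blast
  have IH2: "\<forall>m<n. \<exists>y>0. reval f (m # xs) y \<and> (\<forall>z. reval f (m # xs) z \<longrightarrow> y = z)"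
    using mn.IH(2) by blast
  show ?case
  proof (rule ccontr)
    assume "n \<noteq> y'"
    then have "n < y' \<or> y' < n" by arith
    then show False
    proof
      assume "n < y'"
      then obtain y where "y > 0" "reval f (n # xs) y" using B by blast
      then show False using IH1 by fastforce
    next
      assume "y' < n"
      then obtain y where "y > 0" "\<forall>z. reval f (y' # xs) z \<longrightarrow> y = z" using IH2 by blast
      then show False using A by fastforce
    qed
  qed
qed



definition rfun :: "nat \<Rightarrow> (nat list \<Rightarrow> nat) \<Rightarrow> bool" where
  "rfun k g \<longleftrightarrow> (\<exists>f. \<forall>xs. length xs = k \<longrightarrow> reval f xs (g xs))"

lemma rfun_cong: "rfun k g \<Longrightarrow> (\<And>xs. length xs = k \<Longrightarrow> g xs = h xs) \<Longrightarrow> rfun k h"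
  unfolding rfun_def by metis

lemma reval_const: "\<exists>f. \<forall>xs. reval f xs c"
proof (induction c)
  case 0 then show ?case by (blast intro: reval.zero)
next
  case (Suc c)
  then obtain f where f: "\<forall>xs. reval f xs c" by blast
  have "reval (Comp Succ [f]) xs (Suc c)" for xs
    by (rule reval.comp[of xs "[f]" "[c]"]) (use f in \<open>auto intro: reval.succ\<close>)
  then show ?case by blast
qed

lemma rfun_const[intro]: "rfun k (\<lambda>xs. c)"
  unfolding rfun_def using reval_const by blast

lemma rfun_proj[intro]: "i < k \<Longrightarrow> rfun k (\<lambda>xs. xs ! i)"
  unfolding rfun_def by (blast intro: reval.proj)

lemma rfun_comp1: "rfun 1 F \<Longrightarrow> rfun k g \<Longrightarrow> rfun k (\<lambda>xs. F [g xs])"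
proof -
  assume "rfun 1 F" "rfun k g"
  then obtain f1 f2 where f1: "\<And>xs. length xs = 1 \<Longrightarrow> reval f1 xs (F xs)"
    and f2: "\<And>xs. length xs = k \<Longrightarrow> reval f2 xs (g xs)" unfolding rfun_def by blast
  have "reval (Comp f1 [f2]) xs (F [g xs])" if "length xs = k" for xs
    by (rule reval.comp[of xs "[f2]" "[g xs]"]) (auto intro: f1 f2 that)
  then show ?thesis unfolding rfun_def by blast
qed

lemma rfun_comp2: "rfun 2 F \<Longrightarrow> rfun k g \<Longrightarrow> rfun k h \<Longrightarrow> rfun k (\<lambda>xs. F [g xs, h xs])"
proof -
  assume "rfun 2 F" "rfun k g" "rfun k h"
  then obtain f1 f2 f3 where f1: "\<And>xs. length xs = 2 \<Longrightarrow> reval f1 xs (F xs)"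
    and f2: "\<And>xs. length xs = k \<Longrightarrow> reval f2 xs (g xs)"
    and f3: "\<And>xs. length xs = k \<Longrightarrow> reval f3 xs (h xs)" unfolding rfun_def by blast
  have "reval (Comp f1 [f2, f3]) xs (F [g xs, h xs])" if "length xs = k" for xs
    by (rule reval.comp[of xs "[f2, f3]" "[g xs, h xs]"]) (auto intro: f1 f2 f3 that)
  then show ?thesis unfolding rfun_def by blast
qed

primrec PR :: "(nat list \<Rightarrow> nat) \<Rightarrow> (nat list \<Rightarrow> nat) \<Rightarrow> nat \<Rightarrow> nat list \<Rightarrow> nat" where
  "PR B G 0 ys = B ys"
| "PR B G (Suc n) ys = G (PR B G n ys # n # ys)"

lemma rfun_prim: "rfun k B \<Longrightarrow> rfun (Suc (Suc k)) G \<Longrightarrow> rfun (Suc k) (\<lambda>xs. PR B G (hd xs) (tl xs))"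
proof -
  assume "rfun k B" "rfun (Suc (Suc k)) G"
  then obtain f g where f: "\<And>xs. length xs = k \<Longrightarrow> reval f xs (B xs)"
    and g: "\<And>xs. length xs = Suc (Suc k) \<Longrightarrow> reval g xs (G xs)" unfolding rfun_def by blast
  have P: "reval (Prim f g) (n # ys) (PR B G n ys)" if "length ys = k" for n ys
  proof (induction n)
    case 0 then show ?case by (simp add: reval.prim0 f that)
  next
    case (Suc n) then show ?case by (auto intro!: reval.primS g simp: that)
  qed
  have "reval (Prim f g) xs (PR B G (hd xs) (tl xs))" if "length xs = Suc k" for xs
    using P[of "tl xs" "hd xs"] that by (cases xs) auto
  then show ?thesis unfolding rfun_def by blast
qed

lemma rfun_prim2: "rfun k B \<Longrightarrow> rfun (k+2) G \<Longrightarrow> rfun (k+1) (\<lambda>xs. PR B G (hd xs) (tl xs))"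
  using rfun_prim[of k B G] by simp

lemma rfun_prim_0: "rfun 0 B \<Longrightarrow> rfun 2 G \<Longrightarrow> rfun 1 (\<lambda>xs. PR B G (hd xs) (tl xs))"
  using rfun_prim[of 0 B G] by (simp add: numeral_2_eq_2)

lemma rfun_prim_1: "rfun 1 B \<Longrightarrow> rfun 3 G \<Longrightarrow> rfun 2 (\<lambda>xs. PR B G (hd xs) (tl xs))"
  using rfun_prim[of 1 B G] by (simp add: numeral_2_eq_2 numeral_3_eq_3)

lemma rfun_Suc1: "rfun 1 (\<lambda>ys. Suc (ys!0))"
proof -
  have "reval Succ xs (Suc (xs!0))" if "length xs = 1" for xs
    using that by (cases xs) (auto intro: reval.succ)
  then show ?thesis unfolding rfun_def by blast
qed

lemma rfun_Suc[intro]: "rfun k g \<Longrightarrow> rfun k (\<lambda>xs. Suc (g xs))"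
  using rfun_comp1[OF rfun_Suc1] by simp

lemma len2: "length xs = 2 \<longleftrightarrow> (\<exists>x y. xs = [x, y])"
  by (auto simp: length_Suc_conv numeral_2_eq_2)

lemma rfun_add2: "rfun 2 (\<lambda>xs. xs!0 + xs!1)"
proof -
  have "rfun (1+1) (\<lambda>xs. PR (\<lambda>ys. ys!0) (\<lambda>zs. Suc (zs!0)) (hd xs) (tl xs))"
    by (rule rfun_prim2) auto
  then have R: "rfun 2 (\<lambda>xs. PR (\<lambda>ys. ys!0) (\<lambda>zs. Suc (zs!0)) (hd xs) (tl xs))" by (simp only: one_add_one)
  have E: "PR (\<lambda>ys. ys!0) (\<lambda>zs. Suc (zs!0)) n ys = n + ys!0" for n ys
    by (induction n) auto
  show ?thesis
    by (rule rfun_cong[OF R]) (auto simp: len2 E)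
qed



lemma rfun_add[intro]: "rfun k g \<Longrightarrow> rfun k h \<Longrightarrow> rfun k (\<lambda>xs. g xs + h xs)"
  using rfun_comp2[OF rfun_add2] by simp

lemmas rfun_I = rfun_add rfun_Suc rfun_proj rfun_const

lemma rfun_unary:
  assumes "rfun 2 (\<lambda>zs. G (zs!0) (zs!1))" "\<phi> 0 = c" "\<And>n. \<phi> (Suc n) = G (\<phi> n) n"
  shows "rfun 1 (\<lambda>ys. \<phi> (ys!0))"
proof -
  have R: "rfun 1 (\<lambda>xs. PR (\<lambda>_. c) (\<lambda>zs. G (zs!0) (zs!1)) (hd xs) (tl xs))"
    by (rule rfun_prim_0[OF rfun_const assms(1)])
  have E: "PR (\<lambda>_. c) (\<lambda>zs. G (zs!0) (zs!1)) n ys = \<phi> n" for n ys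
    by (induction n) (auto simp: assms)
  show ?thesis
    by (rule rfun_cong[OF R]) (use E in \<open>auto simp: length_Suc_conv\<close>)
qed

lemma rfun_lift1: "rfun 1 (\<lambda>ys. \<phi> (ys!0)) \<Longrightarrow> rfun k g \<Longrightarrow> rfun k (\<lambda>xs. \<phi> (g xs))"
  using rfun_comp1[of "\<lambda>ys. \<phi> (ys!0)"] by simp

lemma rfun_lift2: "rfun 2 (\<lambda>ys. \<phi> (ys!0) (ys!1)) \<Longrightarrow> rfun k g \<Longrightarrow> rfun k h \<Longrightarrow> rfun k (\<lambda>xs. \<phi> (g xs) (h xs))"
  using rfun_comp2[of "\<lambda>ys. \<phi> (ys!0) (ys!1)"] by simp

lemma rfun_pred1: "rfun 1 (\<lambda>ys. ys!0 - 1)"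
  apply (rule rfun_unary[where G="\<lambda>r n. n" and c=0])
  apply (intro rfun_I) apply simp_all done

lemma rfun_pred[intro]: "rfun k g \<Longrightarrow> rfun k (\<lambda>xs. g xs - 1)"
  by (rule rfun_lift1[OF rfun_pred1])

lemma rfun_mult2: "rfun 2 (\<lambda>xs. xs!0 * xs!1)"
proof -
  have R: "rfun 2 (\<lambda>xs. PR (\<lambda>ys. 0) (\<lambda>zs. zs!0 + zs!2) (hd xs) (tl xs))"
    by (rule rfun_prim_1) (intro rfun_I rfun_pred; simp)+
  have E: "PR (\<lambda>ys. 0) (\<lambda>zs. zs!0 + zs!2) n ys = n * ys!0" for n ys
    by (induction n) auto
  show ?thesis
    by (rule rfun_cong[OF R]) (use E in \<open>auto simp: len2\<close>)
qed

lemmas rfun_I1 = rfun_I rfun_pred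

lemma rfun_mult[intro]: "rfun k g \<Longrightarrow> rfun k h \<Longrightarrow> rfun k (\<lambda>xs. g xs * h xs)"
  using rfun_comp2[OF rfun_mult2] by simp

lemma rfun_monus2: "rfun 2 (\<lambda>xs. xs!1 - xs!0)"
proof -
  have R: "rfun 2 (\<lambda>xs. PR (\<lambda>ys. ys!0) (\<lambda>zs. zs!0 - 1) (hd xs) (tl xs))"
    by (rule rfun_prim_1) (intro rfun_I rfun_pred; simp)+
  have E: "PR (\<lambda>ys. ys!0) (\<lambda>zs. zs!0 - 1) n ys = ys!0 - n" for n ys
    by (induction n) auto
  show ?thesis
    by (rule rfun_cong[OF R]) (use E in \<open>auto simp: len2\<close>)
qed

lemma rfun_minus[intro]: "rfun k g \<Longrightarrow> rfun k h \<Longrightarrow> rfun k (\<lambda>xs. g xs - h xs)"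
  using rfun_comp2[OF rfun_monus2, of k h g] by simp

lemmas rfun_I2 = rfun_add rfun_mult rfun_minus rfun_Suc rfun_proj rfun_const

definition ind :: "bool \<Rightarrow> nat" where "ind P = (if P then 1 else 0)"

lemma rfun_le[intro]: "rfun k g \<Longrightarrow> rfun k h \<Longrightarrow> rfun k (\<lambda>xs. ind (g xs \<le> h xs))"
proof -
  assume "rfun k g" "rfun k h"
  then have "rfun k (\<lambda>xs. 1 - (g xs - h xs))" by (intro rfun_I2)
  then show ?thesis by (rule rfun_cong) (auto simp: ind_def)
qed

lemma rfun_conj[intro]: "rfun k (\<lambda>xs. ind (P xs)) \<Longrightarrow> rfun k (\<lambda>xs. ind (Q xs)) \<Longrightarrow> rfun k (\<lambda>xs. ind (P xs \<and> Q xs))"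
proof -
  assume "rfun k (\<lambda>xs. ind (P xs))" "rfun k (\<lambda>xs. ind (Q xs))"
  then have "rfun k (\<lambda>xs. ind (P xs) * ind (Q xs))" by (intro rfun_I2)
  then show ?thesis by (rule rfun_cong) (auto simp: ind_def)
qed

lemma rfun_disj[intro]: "rfun k (\<lambda>xs. ind (P xs)) \<Longrightarrow> rfun k (\<lambda>xs. ind (Q xs)) \<Longrightarrow> rfun k (\<lambda>xs. ind (P xs \<or> Q xs))"
proof -
  assume "rfun k (\<lambda>xs. ind (P xs))" "rfun k (\<lambda>xs. ind (Q xs))"
  then have "rfun k (\<lambda>xs. 1 - (1 - (ind (P xs) + ind (Q xs))))"
    by (intro rfun_minus rfun_add rfun_const)
  then show ?thesis by (rule rfun_cong) (auto simp: ind_def)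
qed

lemma rfun_eq[intro]: "rfun k g \<Longrightarrow> rfun k h \<Longrightarrow> rfun k (\<lambda>xs. ind (g xs = h xs))"
proof -
  assume "rfun k g" "rfun k h"
  then have "rfun k (\<lambda>xs. ind (g xs \<le> h xs \<and> h xs \<le> g xs))" by (intro rfun_conj rfun_le)
  then show ?thesis by (rule rfun_cong) (auto simp: ind_def)
qed

lemma rfun_if[intro]: "rfun k (\<lambda>xs. ind (P xs)) \<Longrightarrow> rfun k g \<Longrightarrow> rfun k h \<Longrightarrow> rfun k (\<lambda>xs. if P xs then g xs else h xs)"
proof -
  assume "rfun k (\<lambda>xs. ind (P xs))" "rfun k g" "rfun k h"
  then have "rfun k (\<lambda>xs. ind (P xs) * g xs + (1 - ind (P xs)) * h xs)" by (intro rfun_I2)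
  then show ?thesis by (rule rfun_cong) (auto simp: ind_def)
qed

lemmas rfun_I3 = rfun_I2 rfun_le rfun_eq rfun_conj rfun_disj rfun_if
lemmas rfun_I4 = rfun_I3

lemma rfun_mod2_1: "rfun 1 (\<lambda>ys. ys!0 mod 2)"
  apply (rule rfun_unary[where G="\<lambda>r n. 1 - r" and c=0])
  apply (intro rfun_I4; simp) apply simp apply presburger done

lemma rfun_mod2[intro]: "rfun k g \<Longrightarrow> rfun k (\<lambda>xs. g xs mod 2)"
  by (rule rfun_lift1[OF rfun_mod2_1])

lemma rfun_div2_1: "rfun 1 (\<lambda>ys. ys!0 div 2)"
  apply (rule rfun_unary[where G="\<lambda>r n. r + n mod 2" and c=0])
  apply (intro rfun_I4 rfun_mod2; simp) apply simp apply presburger done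

lemma rfun_div2[intro]: "rfun k g \<Longrightarrow> rfun k (\<lambda>xs. g xs div 2)"
  by (rule rfun_lift1[OF rfun_div2_1])

lemmas rfun_I5 = rfun_I3 rfun_mod2 rfun_div2

lemma rfun_tri1: "rfun 1 (\<lambda>ys. triangle (ys!0))"
  apply (rule rfun_unary[where G="\<lambda>r n. r + Suc n" and c=0])
  apply (intro rfun_I5; simp) apply (auto) done

lemma rfun_tri[intro]: "rfun k g \<Longrightarrow> rfun k (\<lambda>xs. triangle (g xs))"
  by (rule rfun_lift1[OF rfun_tri1])

primrec diag :: "nat \<Rightarrow> nat" where
  "diag 0 = 0"
| "diag (Suc m) = (if triangle (Suc (diag m)) = Suc m then Suc (diag m) else diag m)"

lemmas rfun_I6 = rfun_I5 rfun_tri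

lemma rfun_diag1: "rfun 1 (\<lambda>ys. diag (ys!0))"
  apply (rule rfun_unary[where G="\<lambda>r n. if triangle (Suc r) = Suc n then Suc r else r" and c=0])
  apply (intro rfun_I6; simp) apply (auto) done

lemma rfun_diag[intro]: "rfun k g \<Longrightarrow> rfun k (\<lambda>xs. diag (g xs))"
  by (rule rfun_lift1[OF rfun_diag1])



lemma triangle_mono: "i \<le> j \<Longrightarrow> triangle i \<le> triangle j"
  by (induction j rule: dec_induct) (auto simp: triangle_Suc)

lemma diag_inv: "triangle (diag m) \<le> m \<and> m < triangle (Suc (diag m))"
proof (induction m)
  case 0 then show ?case by (simp add: triangle_def)
next
  case (Suc m) then show ?case by (auto simp: triangle_Suc)
qed

lemma diag_unique: assumes "triangle d \<le> m" "m < triangle (Suc d)" shows "diag m = d"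
proof (rule ccontr)
  assume "diag m \<noteq> d"
  then have "diag m < d \<or> d < diag m" by arith
  then show False
  proof
    assume "diag m < d"
    then have "triangle (Suc (diag m)) \<le> triangle d" by (intro triangle_mono) simp
    then show False using diag_inv[of m] assms by simp
  next
    assume "d < diag m"
    then have "triangle (Suc d) \<le> triangle (diag m)" by (intro triangle_mono) simp
    then show False using diag_inv[of m] assms by simp
  qed
qed

definition pfst :: "nat \<Rightarrow> nat" where "pfst m = m - triangle (diag m)"
definition psnd :: "nat \<Rightarrow> nat" where "psnd m = diag m - pfst m"

lemma diag_pe: "diag (prod_encode (x, y)) = x + y"
  by (rule diag_unique) (auto simp: prod_encode_def triangle_Suc)

lemma pfst_pe[simp]: "pfst (prod_encode (x, y)) = x"
  unfolding pfst_def diag_pe by (simp add: prod_encode_def)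

lemma psnd_pe[simp]: "psnd (prod_encode (x, y)) = y"
  unfolding psnd_def diag_pe by simp

lemma rfun_pfst[intro]: "rfun k g \<Longrightarrow> rfun k (\<lambda>xs. pfst (g xs))"
  unfolding pfst_def by (intro rfun_I6 rfun_diag)

lemma rfun_psnd[intro]: "rfun k g \<Longrightarrow> rfun k (\<lambda>xs. psnd (g xs))"
  unfolding psnd_def by (intro rfun_I6 rfun_diag rfun_pfst)

definition IP :: "nat \<Rightarrow> nat" where "IP z = (1 - z mod 2) * (z div 2)"
definition IN :: "nat \<Rightarrow> nat" where "IN z = z mod 2 * (z div 2 + 1)"
definition ipair :: "nat \<Rightarrow> nat \<times> nat" where "ipair z = (IP z, IN z)"
definition zv :: "nat \<times> nat \<Rightarrow> int" where "zv p = int (fst p) - int (snd p)"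
definition pmul :: "nat \<times> nat \<Rightarrow> nat \<times> nat \<Rightarrow> nat \<times> nat" where
  "pmul p q = (fst p * fst q + snd p * snd q, fst p * snd q + snd p * fst q)"
definition psub :: "nat \<times> nat \<Rightarrow> nat \<times> nat \<Rightarrow> nat \<times> nat" where
  "psub p q = (fst p + snd q, snd p + fst q)"
definition ple :: "nat \<times> nat \<Rightarrow> nat \<times> nat \<Rightarrow> bool" where
  "ple p q \<longleftrightarrow> fst p + snd q \<le> fst q + snd p"

lemma zv_ipair[simp]: "zv (ipair (int_encode i)) = i"
  by (auto simp: zv_def ipair_def IP_def IN_def int_encode_def sum_encode_def)

lemma zv_pmul[simp]: "zv (pmul p q) = zv p * zv q"
  by (simp add: zv_def pmul_def algebra_simps)

lemma zv_psub[simp]: "zv (psub p q) = zv p - zv q"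
  by (simp add: zv_def psub_def algebra_simps)

lemma ple_iff[simp]: "ple p q \<longleftrightarrow> zv p \<le> zv q"
proof -
  have "int (fst p) - int (snd p) \<le> int (fst q) - int (snd q) \<longleftrightarrow>
        int (fst p + snd q) \<le> int (fst q + snd p)" unfolding of_nat_add by linarith
  then show ?thesis unfolding zv_def ple_def by linarith
qed

definition rfunP :: "nat \<Rightarrow> (nat list \<Rightarrow> nat \<times> nat) \<Rightarrow> bool" where
  "rfunP k g \<longleftrightarrow> rfun k (\<lambda>xs. fst (g xs)) \<and> rfun k (\<lambda>xs. snd (g xs))"

lemma rfunP_ipair: "rfun k g \<Longrightarrow> rfunP k (\<lambda>xs. ipair (g xs))"
  unfolding rfunP_def ipair_def IP_def IN_def by (simp; intro conjI rfun_I6)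

lemma rfunP_pmul: "rfunP k g \<Longrightarrow> rfunP k h \<Longrightarrow> rfunP k (\<lambda>xs. pmul (g xs) (h xs))"
  unfolding rfunP_def pmul_def by (simp; intro conjI rfun_I6; simp)

lemma rfunP_psub: "rfunP k g \<Longrightarrow> rfunP k h \<Longrightarrow> rfunP k (\<lambda>xs. psub (g xs) (h xs))"
  unfolding rfunP_def psub_def by (simp; intro conjI rfun_I6; simp)

lemma rfun_ple: "rfunP k g \<Longrightarrow> rfunP k h \<Longrightarrow> rfun k (\<lambda>xs. ind (ple (g xs) (h xs)))"
  unfolding rfunP_def ple_def by (intro rfun_I6; simp)

definition Cond where
  "Cond p0 q0 p1 q1 p2 q2 p3 q3 \<longleftrightarrow>
     (ple (pmul p2 (pmul q1 q0)) (pmul (pmul p1 (psub q0 p0)) q2) \<and>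
      ple (pmul (pmul p1 (psub q0 p0)) q3) (pmul p3 (pmul q1 q0))) \<or>
     (ple (pmul p3 (pmul q1 q0)) (pmul (pmul p1 (psub q0 p0)) q3) \<and>
      ple (pmul (pmul p1 (psub q0 p0)) q2) (pmul p2 (pmul q1 q0)))"

definition decide :: "nat \<Rightarrow> nat" where
  "decide n = ind (Cond
     (ipair (pfst (pfst n))) (ipair (psnd (pfst n)))
     (ipair (pfst (pfst (psnd n)))) (ipair (psnd (pfst (psnd n))))
     (ipair (pfst (pfst (psnd (psnd n))))) (ipair (psnd (pfst (psnd (psnd n)))))
     (ipair (pfst (psnd (psnd (psnd n))))) (ipair (psnd (psnd (psnd (psnd n))))))"

lemma rfun_decide: "rfun 1 (\<lambda>xs. decide (xs!0))"
  unfolding decide_def Cond_def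
  by (intro rfun_disj rfun_conj rfun_ple rfunP_pmul rfunP_psub rfunP_ipair rfun_pfst rfun_psnd rfun_proj) simp_all

lemma decide_code:
  assumes "quotient_of lam = (p0, q0)" "quotient_of t = (p1, q1)"
    "quotient_of a = (p2, q2)" "quotient_of b = (p3, q3)"
  shows "decide (instance_code lam t a b) = ind (
     (p2 * (q1 * q0) \<le> p1 * (q0 - p0) * q2 \<and> p1 * (q0 - p0) * q3 \<le> p3 * (q1 * q0)) \<or>
     (p3 * (q1 * q0) \<le> p1 * (q0 - p0) * q3 \<and> p1 * (q0 - p0) * q2 \<le> p2 * (q1 * q0)))"
  unfolding decide_def instance_code_def rat_code_def Cond_def using assms by simp



lemma disc_bounds:
  fixes l m M T :: real
  assumes "0 \<le> l" "l < 1" "\<And>i. m \<le> f i \<and> f i \<le> M" "(\<lambda>i. f i * l^i) sums T"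
  shows "m / (1 - l) \<le> T \<and> T \<le> M / (1 - l)"
proof -
  have g: "(\<lambda>i. l^i) sums (1 / (1 - l))" using geometric_sums[of l] assms by simp
  have gm: "(\<lambda>i. m * l^i) sums (m / (1 - l))" using sums_mult[OF g, of m] by simp
  have gM: "(\<lambda>i. M * l^i) sums (M / (1 - l))" using sums_mult[OF g, of M] by simp
  have "m / (1 - l) \<le> T"
    by (rule sums_le[OF _ gm assms(4)]) (simp add: assms(1,3) mult_right_mono)
  moreover have "T \<le> M / (1 - l)"
    by (rule sums_le[OF _ assms(4) gM]) (simp add: assms(1,3) mult_right_mono)
  ultimately show ?thesis by simp
qed

context
  fixes l x :: real
  assumes l1: "1/2 \<le> l" and l2: "l < 1" and x0: "0 \<le> x" and x1: "x \<le> 1 / (1 - l)"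
begin

primrec gx :: "nat \<Rightarrow> real" where
  "gx 0 = x"
| "gx (Suc n) = (if 1 \<le> gx n then (gx n - 1) / l else gx n / l)"

definition cc :: "nat \<Rightarrow> real" where "cc n = (if 1 \<le> gx n then 1 else 0)"

lemma gx_bounds: "0 \<le> gx n \<and> gx n \<le> 1 / (1 - l)"
proof (induction n)
  case 0 then show ?case using x0 x1 by simp
next
  case (Suc n)
  have lp: "0 < l" "0 < 1 - l" using l1 l2 by auto
  show ?case
  proof (cases "1 \<le> gx n")
    case True
    have "gx n - 1 \<le> l / (1 - l)"
    proof -
      have "1 / (1 - l) - 1 = l / (1 - l)" using lp by (simp add: field_simps)
      then show ?thesis using Suc by linarith
    qed
    then have "(gx n - 1) / l \<le> 1 / (1 - l)" using lp by (simp add: field_simps)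
    moreover have "0 \<le> (gx n - 1) / l" using True lp by simp
    ultimately show ?thesis using True by simp
  next
    case False
    have "gx n * (1 - l) \<le> l"
    proof -
      have "gx n * (1 - l) \<le> 1 * (1 - l)" using False Suc lp
        by (intro mult_right_mono) auto
      then have "gx n * (1 - l) \<le> 1 - l" by simp
      then show ?thesis using l1 by linarith
    qed
    then have "gx n / l \<le> 1 / (1 - l)" using lp by (simp add: field_simps)
    moreover have "0 \<le> gx n / l" using Suc lp by simp
    ultimately show ?thesis using False by simp
  qed
qed

lemma gx_partial: "x = (\<Sum>i<n. cc i * l^i) + l^n * gx n"
proof (induction n)
  case 0 then show ?case by simp
next
  case (Suc n)
  have lp: "0 < l" using l1 by auto
  have "l * gx (Suc n) = gx n - cc n" using lp by (simp add: cc_def)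
  then have "l^Suc n * gx (Suc n) = l^n * gx n - cc n * l^n"
    by (metis mult.assoc mult.commute power_Suc right_diff_distrib)
  then show ?case using Suc by simp
qed

lemma greedy_sums: "(\<lambda>i. cc i * l^i) sums x"
proof -
  have lp: "0 < l" using l1 by auto
  have "(\<lambda>n. l^n * (1 / (1 - l))) \<longlonglongrightarrow> 0 * (1 / (1 - l))"
    by (intro tendsto_mult tendsto_const LIMSEQ_power_zero) (use lp l2 in auto)
  then have A: "(\<lambda>n. l^n * (1 / (1 - l))) \<longlonglongrightarrow> 0" by simp
  have "(\<lambda>n. l^n * gx n) \<longlonglongrightarrow> 0"
  proof (rule tendsto_sandwich[OF _ _ tendsto_const A])
    show "\<forall>\<^sub>F n in sequentially. 0 \<le> l^n * gx n" using gx_bounds lp by simp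
    show "\<forall>\<^sub>F n in sequentially. l^n * gx n \<le> l^n * (1 / (1 - l))"
      by (intro always_eventually allI mult_left_mono) (use gx_bounds lp in auto)
  qed
  then have "(\<lambda>n. x - l^n * gx n) \<longlonglongrightarrow> x - 0" by (intro tendsto_diff tendsto_const)
  moreover have "(\<lambda>n. \<Sum>i<n. cc i * l^i) = (\<lambda>n. x - l^n * gx n)"
  proof
    fix n show "(\<Sum>i<n. cc i * l^i) = x - l^n * gx n" using gx_partial[of n] by linarith
  qed
  ultimately show ?thesis unfolding sums_def by simp
qed

lemma greedy_sums': "(\<lambda>i. (if 1 \<le> gx i then 1 else 0) * l^i) sums x"
  using greedy_sums unfolding cc_def .

end

lemma greedy_exists:
  fixes l x :: real
  assumes "1/2 \<le> l" "l < 1" "0 \<le> x" "x \<le> 1 / (1 - l)"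
  shows "\<exists>e. (\<lambda>i. (if e i then 1 else 0) * l^i) sums x"
proof -
  show ?thesis by (rule exI[where x="\<lambda>i. 1 \<le> gx l x i"]) (use greedy_sums'[OF assms] in simp)
qed



lemma tds_real_iff:
  fixes l m M T :: real
  assumes l1: "1/2 \<le> l" and l2: "l < 1" and mM: "m \<le> M"
  shows "(\<exists>e. (\<lambda>i. (if e i then M else m) * l^i) sums T) \<longleftrightarrow> m / (1 - l) \<le> T \<and> T \<le> M / (1 - l)"
proof
  assume "\<exists>e. (\<lambda>i. (if e i then M else m) * l^i) sums T"
  then obtain e where "(\<lambda>i. (if e i then M else m) * l^i) sums T" by blast
  then show "m / (1 - l) \<le> T \<and> T \<le> M / (1 - l)"
    by (rule disc_bounds[rotated 3]) (use l1 l2 mM in auto)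
next
  assume T: "m / (1 - l) \<le> T \<and> T \<le> M / (1 - l)"
  have lp: "0 < l" "0 < 1 - l" using l1 l2 by auto
  have g: "(\<lambda>i. l^i) sums (1 / (1 - l))" using geometric_sums[of l] lp by simp
  have gm: "(\<lambda>i. m * l^i) sums (m / (1 - l))" using sums_mult[OF g, of m] by simp
  show "\<exists>e. (\<lambda>i. (if e i then M else m) * l^i) sums T"
  proof (cases "m = M")
    case True
    then have "T = m / (1 - l)" using T by simp
    then show ?thesis using gm by (intro exI[where x="\<lambda>_. False"]) simp
  next
    case False
    then have D: "0 < M - m" using mM by simp
    define x where "x = (T - m / (1 - l)) / (M - m)"
    have x0: "0 \<le> x" unfolding x_def using T D by simp
    have "T - m / (1 - l) \<le> (M - m) / (1 - l)" using T by (simp add: diff_divide_distrib)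
    then have "x \<le> ((M - m) / (1 - l)) / (M - m)" unfolding x_def
      by (rule divide_right_mono) (use D in simp)
    also have "\<dots> = 1 / (1 - l)" using D by simp
    finally have x1: "x \<le> 1 / (1 - l)" .
    obtain e where e: "(\<lambda>i. (if e i then 1 else 0) * l^i) sums x"
      using greedy_exists[OF l1 l2 x0 x1] by blast
    have "(\<lambda>i. m * l^i + (M - m) * ((if e i then 1 else 0) * l^i)) sums (m / (1 - l) + (M - m) * x)"
      by (intro sums_add gm sums_mult e)
    moreover have "m / (1 - l) + (M - m) * x = T" unfolding x_def using D by simp
    moreover have "(\<lambda>i. m * l^i + (M - m) * ((if e i then 1 else 0) * l^i)) =
                   (\<lambda>i. (if e i then M else m) * l^i)"
      by (auto simp: fun_eq_iff algebra_simps)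
    ultimately show ?thesis by auto
  qed
qed

lemma TDS_e: "TDS lam t a b \<longleftrightarrow>
  (\<exists>e. (\<lambda>i. (if e i then real_of_rat b else real_of_rat a) * real_of_rat lam ^ i) sums real_of_rat t)"
proof
  assume "TDS lam t a b"
  then obtain w where w: "\<forall>i. w i \<in> {a, b}"
    "(\<lambda>i. real_of_rat (w i) * real_of_rat lam ^ i) sums real_of_rat t" unfolding TDS_def by blast
  have "(\<lambda>i. real_of_rat (w i) * real_of_rat lam ^ i) =
        (\<lambda>i. (if w i = b then real_of_rat b else real_of_rat a) * real_of_rat lam ^ i)"
    using w(1) by (auto simp: fun_eq_iff)
  then show "\<exists>e. (\<lambda>i. (if e i then real_of_rat b else real_of_rat a) * real_of_rat lam ^ i) sums real_of_rat t"
    using w(2) by (intro exI[where x="\<lambda>i. w i = b"]) simp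
next
  assume "\<exists>e. (\<lambda>i. (if e i then real_of_rat b else real_of_rat a) * real_of_rat lam ^ i) sums real_of_rat t"
  then obtain e where e: "(\<lambda>i. (if e i then real_of_rat b else real_of_rat a) * real_of_rat lam ^ i) sums real_of_rat t"
    by blast
  have "(\<lambda>i. real_of_rat (if e i then b else a) * real_of_rat lam ^ i) =
        (\<lambda>i. (if e i then real_of_rat b else real_of_rat a) * real_of_rat lam ^ i)"
    by (auto simp: fun_eq_iff)
  then show "TDS lam t a b" unfolding TDS_def using e
    by (intro exI[where x="\<lambda>i. if e i then b else a"]) auto
qed

lemma TDS_swap: "TDS lam t a b \<longleftrightarrow> TDS lam t b a"
  unfolding TDS_def by (simp add: insert_commute)

lemma div_le_rat: "0 < lam' \<Longrightarrow> real_of_rat a / real_of_rat lam' \<le> real_of_rat t \<longleftrightarrow> a \<le> t * lam'"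
proof -
  assume "0 < lam'"
  then have "0 < real_of_rat lam'" by simp
  then have "real_of_rat a / real_of_rat lam' \<le> real_of_rat t \<longleftrightarrow> real_of_rat a \<le> real_of_rat t * real_of_rat lam'"
    by (simp add: pos_divide_le_eq)
  also have "\<dots> \<longleftrightarrow> a \<le> t * lam'" by (simp add: of_rat_less_eq flip: of_rat_mult)
  finally show ?thesis .
qed

lemma le_div_rat: "0 < lam' \<Longrightarrow> real_of_rat t \<le> real_of_rat a / real_of_rat lam' \<longleftrightarrow> t * lam' \<le> a"
proof -
  assume "0 < lam'"
  then have "0 < real_of_rat lam'" by simp
  then have "real_of_rat t \<le> real_of_rat a / real_of_rat lam' \<longleftrightarrow> real_of_rat t * real_of_rat lam' \<le> real_of_rat a"
    by (simp add: pos_le_divide_eq)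
  also have "\<dots> \<longleftrightarrow> t * lam' \<le> a" by (simp add: of_rat_less_eq flip: of_rat_mult)
  finally show ?thesis .
qed

lemma TDS_ordered:
  assumes "1/2 \<le> lam" "lam < 1" "a \<le> b"
  shows "TDS lam t a b \<longleftrightarrow> a \<le> t * (1 - lam) \<and> t * (1 - lam) \<le> b"
proof -
  have "real_of_rat (1/2) \<le> real_of_rat lam" using assms(1) of_rat_less_eq by blast
  then have l1: "1/2 \<le> real_of_rat lam" by (simp add: of_rat_divide)
  have "real_of_rat lam < real_of_rat 1" using assms(2) of_rat_less by blast
  then have l2: "real_of_rat lam < 1" by simp
  have ab: "real_of_rat a \<le> real_of_rat b" using assms(3) by (simp add: of_rat_less_eq)
  have p: "0 < 1 - lam" using assms(2) by simp
  have eq: "1 - real_of_rat lam = real_of_rat (1 - lam)" by (simp add: of_rat_diff)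
  show ?thesis unfolding TDS_e tds_real_iff[OF l1 l2 ab] eq
    using div_le_rat[OF p] le_div_rat[OF p] by simp
qed

lemma ord_aux: "(a::rat) \<le> b \<Longrightarrow> (P \<longleftrightarrow> a \<le> s \<and> s \<le> b) \<Longrightarrow> (P \<longleftrightarrow> (a \<le> s \<and> s \<le> b) \<or> (b \<le> s \<and> s \<le> a))"
  by auto

lemma ord_aux2: "(b::rat) \<le> a \<Longrightarrow> (P \<longleftrightarrow> b \<le> s \<and> s \<le> a) \<Longrightarrow> (P \<longleftrightarrow> (a \<le> s \<and> s \<le> b) \<or> (b \<le> s \<and> s \<le> a))"
  by auto

lemma TDS_cond:
  assumes "1/2 \<le> lam" "lam < 1"
  shows "TDS lam t a b \<longleftrightarrow>
    (a \<le> t * (1 - lam) \<and> t * (1 - lam) \<le> b) \<or> (b \<le> t * (1 - lam) \<and> t * (1 - lam) \<le> a)"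
proof (cases "a \<le> b")
  case True then show ?thesis by (rule ord_aux[OF _ TDS_ordered[OF assms True]])
next
  case False
  then have ba: "b \<le> a" by simp
  have "TDS lam t a b \<longleftrightarrow> b \<le> t * (1 - lam) \<and> t * (1 - lam) \<le> a"
    using TDS_ordered[OF assms ba, of t] TDS_swap[of lam t a b] by simp
  then show ?thesis by (rule ord_aux2[OF ba])
qed


lemma fr: fixes x y a b :: rat assumes "0 < a" "0 < b"
  shows "x / a \<le> y / b \<longleftrightarrow> x * b \<le> y * a"
  using assms by (simp add: divide_le_eq le_divide_eq mult.commute mult.left_commute)
lemma fr2: fixes P0 Q0 P1 Q1 :: rat assumes "0 < Q0" "0 < Q1"
  shows "P1 / Q1 * (1 - P0 / Q0) = (P1 * (Q0 - P0)) / (Q1 * Q0)"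
  using assms by (simp add: field_simps)
lemma frac_le:
  fixes p0 q0 p1 q1 p2 q2 :: int
  assumes "0 < q0" "0 < q1" "0 < q2"
  shows "((of_int p2 :: rat) / of_int q2 \<le> (of_int p1 / of_int q1) * (1 - of_int p0 / of_int q0))
     \<longleftrightarrow> p2 * (q1 * q0) \<le> p1 * (q0 - p0) * q2"
proof -
  have q: "(0::rat) < of_int q0" "(0::rat) < of_int q1" "(0::rat) < of_int q2" using assms by simp_all
  have "((of_int p2 :: rat) / of_int q2 \<le> (of_int p1 / of_int q1) * (1 - of_int p0 / of_int q0))
     \<longleftrightarrow> (of_int p2 :: rat) * (of_int q1 * of_int q0) \<le> of_int p1 * (of_int q0 - of_int p0) * of_int q2"
    unfolding fr2[OF q(1,2)] fr[OF q(3) mult_pos_pos[OF q(2,1)]] ..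
  also have "\<dots> \<longleftrightarrow> (of_int (p2 * (q1 * q0)) :: rat) \<le> of_int (p1 * (q0 - p0) * q2)" by simp
  also have "\<dots> \<longleftrightarrow> p2 * (q1 * q0) \<le> p1 * (q0 - p0) * q2" by (rule of_int_le_iff)
  finally show ?thesis .
qed
lemma le_frac:
  fixes p0 q0 p1 q1 p2 q2 :: int
  assumes "0 < q0" "0 < q1" "0 < q2"
  shows "(((of_int p1 :: rat) / of_int q1) * (1 - of_int p0 / of_int q0) \<le> of_int p2 / of_int q2)
     \<longleftrightarrow> p1 * (q0 - p0) * q2 \<le> p2 * (q1 * q0)"
proof -
  have q: "(0::rat) < of_int q0" "(0::rat) < of_int q1" "(0::rat) < of_int q2" using assms by simp_all
  have "(((of_int p1 :: rat) / of_int q1) * (1 - of_int p0 / of_int q0) \<le> of_int p2 / of_int q2)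
     \<longleftrightarrow> of_int p1 * (of_int q0 - of_int p0) * of_int q2 \<le> (of_int p2 :: rat) * (of_int q1 * of_int q0)"
    unfolding fr2[OF q(1,2)] fr[OF mult_pos_pos[OF q(2,1)] q(3)] ..
  also have "\<dots> \<longleftrightarrow> (of_int (p1 * (q0 - p0) * q2) :: rat) \<le> of_int (p2 * (q1 * q0))" by simp
  also have "\<dots> \<longleftrightarrow> p1 * (q0 - p0) * q2 \<le> p2 * (q1 * q0)" by (rule of_int_le_iff)
  finally show ?thesis .
qed

theorem theorem8:
  shows "\<exists>f. total_decider f \<and>
           (\<forall>lam t a b. 1/2 \<le> lam \<and> lam < 1 \<longrightarrow>
              (reval f [instance_code lam t a b] 1 \<longleftrightarrow> TDS lam t a b))"
proof -
  obtain f where f: "\<And>xs. length xs = 1 \<Longrightarrow> reval f xs (decide (xs!0))"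
    using rfun_decide unfolding rfun_def by blast
  have fn: "reval f [n] (decide n)" for n using f[of "[n]"] by simp
  have tot: "total_decider f"
    unfolding total_decider_def
  proof
    fix n show "reval f [n] 0 \<or> reval f [n] 1"
      using fn[of n] by (cases "decide n = 0") (auto simp: decide_def ind_def split: if_splits)
  qed
  have main: "reval f [instance_code lam t a b] 1 \<longleftrightarrow> TDS lam t a b"
    if l: "1/2 \<le> lam" "lam < 1" for lam t a b
  proof -
    obtain p0 q0 where Q0: "quotient_of lam = (p0, q0)" by (cases "quotient_of lam")
    obtain p1 q1 where Q1: "quotient_of t = (p1, q1)" by (cases "quotient_of t")
    obtain p2 q2 where Q2: "quotient_of a = (p2, q2)" by (cases "quotient_of a")
    obtain p3 q3 where Q3: "quotient_of b = (p3, q3)" by (cases "quotient_of b")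
    have pos: "0 < q0" "0 < q1" "0 < q2" "0 < q3"
      using Q0 Q1 Q2 Q3 quotient_of_denom_pos by blast+
    have eqs: "lam = of_int p0 / of_int q0" "t = of_int p1 / of_int q1"
      "a = of_int p2 / of_int q2" "b = of_int p3 / of_int q3"
      using Q0 Q1 Q2 Q3 quotient_of_div by blast+
    let ?n = "instance_code lam t a b"
    have "reval f [?n] 1 \<longleftrightarrow> decide ?n = 1"
      using fn[of ?n] reval_det by metis
    also have "\<dots> \<longleftrightarrow> (p2 * (q1 * q0) \<le> p1 * (q0 - p0) * q2 \<and> p1 * (q0 - p0) * q3 \<le> p3 * (q1 * q0)) \<or>
     (p3 * (q1 * q0) \<le> p1 * (q0 - p0) * q3 \<and> p1 * (q0 - p0) * q2 \<le> p2 * (q1 * q0))"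
      unfolding decide_code[OF Q0 Q1 Q2 Q3] by (simp add: ind_def)
    also have "\<dots> \<longleftrightarrow> (a \<le> t * (1 - lam) \<and> t * (1 - lam) \<le> b) \<or> (b \<le> t * (1 - lam) \<and> t * (1 - lam) \<le> a)"
      unfolding eqs frac_le[OF pos(1,2,3)] frac_le[OF pos(1,2,4)] le_frac[OF pos(1,2,3)] le_frac[OF pos(1,2,4)] ..
    also have "\<dots> \<longleftrightarrow> TDS lam t a b" using TDS_cond[OF l] by simp
    finally show ?thesis .
  qed
  show ?thesis using tot main by blast
qed

end
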